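(* Let $\mathcal{M}=(\pi,x)$ be an incentive compatible and individually rational auction mechanism with a price-independent allocation policy, whose payments satisfy, for all $i$, $\mathbf{p}$, $\mathbf{c}_{-i}$, $c_i$, $$x_i(c_i,\mathbf{c}_{-i},\mathbf{p})=v_i(c_i,p_i)\pi_i(c_i,\mathbf{c}_{-i},\mathbf{p})-\lambda_i(p_i)\int_{c_i}^{\overline{c}_i}\pi_i(z,\mathbf{c}_{-i},\mathbf{p})\,dz.$$ For each $i$ let $\overline{p}_i\in\arg\max_{p'}\lambda_i(p')$. Then choosing display price $\overline{p}_i$ is a dominant strategy for advertiser $i$ (when costs are reported truthfully): for every $i$, every true cost $c_i$, every $\mathbf{c}_{-i}$, every $\mathbf{p}_{-i}$ and every $p_i'$, $u_i(c_i,(c_i,\mathbf{c}_{-i}),(\overline{p}_i,\mathbf{p}_{-i}),\mathcal{M})\ge u_i(c_i,(c_i,\mathbf{c}_{-i}),(p_i',\mathbf{p}_{-i}),\mathcal{M})$; in particular $(\overline{p}_1,\dots,\overline{p}_n)$ is an equilibrium price profile.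
   Context: There are advertisers $N=\{1,\dots,n\}$ competing for a single ad slot. Advertiser $i$ has a private product cost $c_i\in[\underline{c}_i,\overline{c}_i]$, sets a display price $p_i$, has conversion-rate function $\lambda_i:\mathbb{R}\to(0,1]$ and value $v_i(c_i,p_i)=(p_i-c_i)\lambda_i(p_i)$. An auction mechanism $\mathcal{M}=(\pi,x)$ maps cost reports and display prices $(\mathbf{c}',\mathbf{p})$ to allocations $\pi_i(\mathbf{c}',\mathbf{p})\in\{0,1\}$ (at most one winner) and payments $x_i(\mathbf{c}',\mathbf{p})$; utility $u_i(c_i,\mathbf{c}',\mathbf{p},\mathcal{M})=v_i(c_i,p_i)\pi_i(\mathbf{c}',\mathbf{p})-x_i(\mathbf{c}',\mathbf{p})$. IC: truthful cost reporting maximizes $u_i$ for all $i$, true costs, prices and others' reports. IR: truthful cost reporting yields $u_i\ge0$. The allocation policy is price-independent (PI) if $\pi_i(\mathbf{c}',\mathbf{p}^1)=\pi_i(\mathbf{c}',\mathbf{p}^2)$ for all $i$, all $\mathbf{c}'$ and all price profiles $\mathbf{p}^1,\mathbf{p}^2$. *)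

theory Defs
  imports "HOL-Analysis.Analysis"
begin

(* Advertisers are the elements of a finite index type 'i (N = UNIV, n = CARD('i)).
   Cost profiles and price profiles are functions 'i => real. *)

definition cost_profile :: "('i \<Rightarrow> real) \<Rightarrow> ('i \<Rightarrow> real) \<Rightarrow> ('i \<Rightarrow> real) \<Rightarrow> bool" where
  "cost_profile clo chi c \<longleftrightarrow> (\<forall>j. c j \<in> {clo j..chi j})"

definition adv_value :: "('i \<Rightarrow> real \<Rightarrow> real) \<Rightarrow> 'i \<Rightarrow> real \<Rightarrow> real \<Rightarrow> real" where
  "adv_value lam i ci q = (q - ci) * lam i q"

definition utility ::
  "('i \<Rightarrow> real \<Rightarrow> real) \<Rightarrow> (('i \<Rightarrow> real) \<Rightarrow> ('i \<Rightarrow> real) \<Rightarrow> 'i \<Rightarrow> real)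
   \<Rightarrow> (('i \<Rightarrow> real) \<Rightarrow> ('i \<Rightarrow> real) \<Rightarrow> 'i \<Rightarrow> real)
   \<Rightarrow> 'i \<Rightarrow> real \<Rightarrow> ('i \<Rightarrow> real) \<Rightarrow> ('i \<Rightarrow> real) \<Rightarrow> real" where
  "utility lam alloc pay i ci c' p = adv_value lam i ci (p i) * alloc c' p i - pay c' p i"

definition valid_alloc :: "('i \<Rightarrow> real) \<Rightarrow> ('i \<Rightarrow> real) \<Rightarrow> (('i \<Rightarrow> real) \<Rightarrow> ('i \<Rightarrow> real) \<Rightarrow> 'i \<Rightarrow> real) \<Rightarrow> bool" where
  "valid_alloc clo chi alloc \<longleftrightarrow>
     (\<forall>c p. cost_profile clo chi c \<longrightarrow>
        (\<forall>i. alloc c p i \<in> {0, 1}) \<and> card {i. alloc c p i = 1} \<le> 1)"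

definition incentive_compatible where
  "incentive_compatible clo chi lam alloc pay \<longleftrightarrow>
     (\<forall>i c p ci'. cost_profile clo chi c \<longrightarrow> ci' \<in> {clo i..chi i} \<longrightarrow>
        utility lam alloc pay i (c i) (c(i := ci')) p \<le> utility lam alloc pay i (c i) c p)"

definition individually_rational where
  "individually_rational clo chi lam alloc pay \<longleftrightarrow>
     (\<forall>i c p. cost_profile clo chi c \<longrightarrow> 0 \<le> utility lam alloc pay i (c i) c p)"

definition price_independent where
  "price_independent clo chi alloc \<longleftrightarrow>
     (\<forall>c p1 p2 i. cost_profile clo chi c \<longrightarrow> alloc c p1 i = alloc c p2 i)"

end

theory Submission
  imports Defs
begin

theorem proposition2:
  fixes clo chi :: "'i::finite \<Rightarrow> real"
    and lam :: "'i \<Rightarrow> real \<Rightarrow> real"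
    and alloc pay :: "('i \<Rightarrow> real) \<Rightarrow> ('i \<Rightarrow> real) \<Rightarrow> 'i \<Rightarrow> real"
    and pbar :: "'i \<Rightarrow> real"
  assumes bounds: "\<And>i. clo i \<le> chi i"
    and lam_range: "\<And>i q. 0 < lam i q \<and> lam i q \<le> 1"
    and alloc_ok: "valid_alloc clo chi alloc"
    and IC: "incentive_compatible clo chi lam alloc pay"
    and IR: "individually_rational clo chi lam alloc pay"
    and PI: "price_independent clo chi alloc"
    and payment: "\<And>i c p. cost_profile clo chi c \<Longrightarrow>
        pay c p i = adv_value lam i (c i) (p i) * alloc c p i
                    - lam i (p i) * integral {c i..chi i} (\<lambda>z. alloc (c(i := z)) p i)"
    and pbar_max: "\<And>i q. lam i q \<le> lam i (pbar i)"
  shows "\<forall>i c p q. cost_profile clo chi c \<longrightarrow>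
           utility lam alloc pay i (c i) c (p(i := q))
             \<le> utility lam alloc pay i (c i) c (p(i := pbar i))"
proof (intro allI impI)
  fix i c p q
  assume cp: "cost_profile clo chi c"
  define I where "I = integral {c i..chi i} (\<lambda>z. alloc (c(i := z)) p i)"
  have cpz: "cost_profile clo chi (c(i := z))" if "z \<in> {c i..chi i}" for z
    using cp that unfolding cost_profile_def by (auto intro: order_trans)
  have int_eq: "integral {c i..chi i} (\<lambda>z. alloc (c(i := z)) p' i) = I" for p'
    unfolding I_def
    by (rule integral_cong) (use PI cpz in \<open>auto simp: price_independent_def\<close>)
  have u: "utility lam alloc pay i (c i) c p' = lam i (p' i) * I" for p'
    using payment[OF cp, of p' i] int_eq[of p'] by (simp add: utility_def)
  have "0 \<le> lam i q * I" using IR cp u[of "p(i := q)"]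
    unfolding individually_rational_def by (metis fun_upd_same)
  then have I0: "0 \<le> I" using lam_range[of i q] by (simp add: zero_le_mult_iff)
  show "utility lam alloc pay i (c i) c (p(i := q)) \<le> utility lam alloc pay i (c i) c (p(i := pbar i))"
    using u[of "p(i := q)"] u[of "p(i := pbar i)"] pbar_max[of i q] I0
    by (simp add: mult_right_mono)
qed

end
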